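(* Let $M=(S,\mathrm{Act},P)$ be an MDP, $T\subseteq S$, $\mathrm{rew}\colon S\to\mathbb{R}_{\ge0}$. Let $(x,r)\in[0,\infty]^S\times\mathbb{N}_\infty^S$ satisfy: (1) $D^{\min,\mathrm{rew}}_x(r)\le r$; (2) $E^{\min}(x)\le x$; (3) for all $s\in S$, $x(s)<\infty$ implies $r(s)<\infty$ (inequalities pointwise). Then $\mathbb{E}^{\min}_s(\Diamond T)\le x(s)$ for all $s\in S$.
   Context: An MDP is a tuple $M=(S,\mathrm{Act},P)$ with $S$ finite, $\mathrm{Act}$ finite, $P\colon S\times\mathrm{Act}\times S\to[0,1]$ with $\sum_{s'}P(s,a,s')\in\{0,1\}$; $\mathrm{Act}(s)=\{a\mid\sum_{s'}P(s,a,s')=1\}$ is nonempty for all $s$; $\mathrm{Post}(s,a)=\{s'\mid P(s,a,s')>0\}$. A strategy is $\sigma\colon S\to\mathrm{Act}$ with $\sigma(s)\in\mathrm{Act}(s)$, inducing a Markov chain with transitions $P(s,\sigma(s),\cdot)$. For an infinite path $s_0s_1\ldots$, the accumulated reward is $\sum_{k=0}^{n-1}\mathrm{rew}(s_k)$ with $n=\min\{i\mid s_i\in T\}$ if $T$ is visited, and $\infty$ otherwise; $\mathbb{E}^\sigma_s(\Diamond T)$ is its expectation under $\sigma$ from $s$, and $\mathbb{E}^{\min}_s(\Diamond T)=\min_\sigma\mathbb{E}^\sigma_s(\Diamond T)$. $E^{\min}(x)(s)=0$ for $s\in T$ and $\mathrm{rew}(s)+\min_{a\in\mathrm{Act}(s)}\sum_{s'\in\mathrm{Post}(s,a)}P(s,a,s')x(s')$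 for $s\notin T$, with $p\cdot\infty=\infty$ for $p>0$, $a+\infty=\infty$. The $x$-decreasing actions of $s$ are $\mathrm{Act}^{\mathrm{rew}}_x(s)=\{a\in\mathrm{Act}(s)\mid x(s)\ge\mathrm{rew}(s)+\sum_{s'\in\mathrm{Post}(s,a)}P(s,a,s')x(s')\}$. $\mathbb{N}_\infty=\mathbb{N}\cup\{\infty\}$, $1+\infty=\infty$, minimum over the empty set is $\infty$. $D^{\min,\mathrm{rew}}_x(r)(s)=0$ for $s\in T$ and $1+\min_{a\in\mathrm{Act}^{\mathrm{rew}}_x(s)}\min_{s'\in\mathrm{Post}(s,a)}r(s')$ for $s\notin T$. *)

theory Defs
  imports Complex_Main "HOL-Library.Extended_Nat" "HOL-Library.Extended_Nonnegative_Real"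
begin

definition Act :: "('s::finite \<Rightarrow> 'a::finite \<Rightarrow> 's \<Rightarrow> real) \<Rightarrow> 's \<Rightarrow> 'a set" where
  "Act P s = {a. (\<Sum>s'\<in>UNIV. P s a s') = 1}"

definition Post :: "('s::finite \<Rightarrow> 'a::finite \<Rightarrow> 's \<Rightarrow> real) \<Rightarrow> 's \<Rightarrow> 'a \<Rightarrow> 's set" where
  "Post P s a = {s'. P s a s' > 0}"

definition is_MDP :: "('s::finite \<Rightarrow> 'a::finite \<Rightarrow> 's \<Rightarrow> real) \<Rightarrow> bool" where
  "is_MDP P \<longleftrightarrow> (\<forall>s a s'. 0 \<le> P s a s' \<and> P s a s' \<le> 1)
      \<and> (\<forall>s a. (\<Sum>s'\<in>UNIV. P s a s') \<in> {0, 1})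
      \<and> (\<forall>s. Act P s \<noteq> {})"

definition strategy :: "('s::finite \<Rightarrow> 'a::finite \<Rightarrow> 's \<Rightarrow> real) \<Rightarrow> ('s \<Rightarrow> 'a) \<Rightarrow> bool" where
  "strategy P \<sigma> \<longleftrightarrow> (\<forall>s. \<sigma> s \<in> Act P s)"

fun reach_within :: "('s::finite \<Rightarrow> 'a::finite \<Rightarrow> 's \<Rightarrow> real) \<Rightarrow> ('s \<Rightarrow> 'a) \<Rightarrow> 's set
    \<Rightarrow> nat \<Rightarrow> 's \<Rightarrow> ennreal" where
  "reach_within P \<sigma> T 0 s = (if s \<in> T then 1 else 0)"
| "reach_within P \<sigma> T (Suc n) s = (if s \<in> T then 1 else
      (\<Sum>s'\<in>UNIV. ennreal (P s (\<sigma> s) s') * reach_within P \<sigma> T n s'))"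

text \<open>Expected reward accumulated in the first n steps before visiting T
  (i.e. expectation of \<Sum>_{k < min n (first visit of T)} rew(s_k)).\<close>
fun acc_within :: "('s::finite \<Rightarrow> 'a::finite \<Rightarrow> 's \<Rightarrow> real) \<Rightarrow> ('s \<Rightarrow> 'a) \<Rightarrow> ('s \<Rightarrow> real)
    \<Rightarrow> 's set \<Rightarrow> nat \<Rightarrow> 's \<Rightarrow> ennreal" where
  "acc_within P \<sigma> rew T 0 s = 0"
| "acc_within P \<sigma> rew T (Suc n) s = (if s \<in> T then 0 else
      ennreal (rew s) + (\<Sum>s'\<in>UNIV. ennreal (P s (\<sigma> s) s') * acc_within P \<sigma> rew T n s'))"

text \<open>Expected accumulated reward until T: the random variable is the accumulated
  reward if T is visited and \<infinity> otherwise. Hence the expectation is \<infinity> if T is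
  missed with positive probability, and otherwise (monotone convergence) the limit
  of the expected truncated accumulated rewards.\<close>
definition exp_rew :: "('s::finite \<Rightarrow> 'a::finite \<Rightarrow> 's \<Rightarrow> real) \<Rightarrow> ('s \<Rightarrow> 'a) \<Rightarrow> ('s \<Rightarrow> real)
    \<Rightarrow> 's set \<Rightarrow> 's \<Rightarrow> ennreal" where
  "exp_rew P \<sigma> rew T s =
     (if (SUP n. reach_within P \<sigma> T n s) < 1 then \<infinity>
      else (SUP n. acc_within P \<sigma> rew T n s))"

definition exp_rew_min :: "('s::finite \<Rightarrow> 'a::finite \<Rightarrow> 's \<Rightarrow> real) \<Rightarrow> ('s \<Rightarrow> real)
    \<Rightarrow> 's set \<Rightarrow> 's \<Rightarrow> ennreal" where
  "exp_rew_min P rew T s = (INF \<sigma>\<in>{\<sigma>. strategy P \<sigma>}. exp_rew P \<sigma> rew T s)"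

text \<open>The Bellman operator E^min (ennreal arithmetic gives p*\<infinity>=\<infinity> for p>0).\<close>
definition Emin_op :: "('s::finite \<Rightarrow> 'a::finite \<Rightarrow> 's \<Rightarrow> real) \<Rightarrow> ('s \<Rightarrow> real) \<Rightarrow> 's set
    \<Rightarrow> ('s \<Rightarrow> ennreal) \<Rightarrow> 's \<Rightarrow> ennreal" where
  "Emin_op P rew T x s = (if s \<in> T then 0 else
     ennreal (rew s) + (INF a\<in>Act P s. \<Sum>s'\<in>Post P s a. ennreal (P s a s') * x s'))"

definition Act_dec :: "('s::finite \<Rightarrow> 'a::finite \<Rightarrow> 's \<Rightarrow> real) \<Rightarrow> ('s \<Rightarrow> real)
    \<Rightarrow> ('s \<Rightarrow> ennreal) \<Rightarrow> 's \<Rightarrow> 'a set" where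
  "Act_dec P rew x s = {a \<in> Act P s.
     x s \<ge> ennreal (rew s) + (\<Sum>s'\<in>Post P s a. ennreal (P s a s') * x s')}"

text \<open>The operator D^{min,rew}_x on N_\<infinity>-valued functions (Inf {} = \<infinity> in enat).\<close>
definition Dmin_op :: "('s::finite \<Rightarrow> 'a::finite \<Rightarrow> 's \<Rightarrow> real) \<Rightarrow> ('s \<Rightarrow> real) \<Rightarrow> 's set
    \<Rightarrow> ('s \<Rightarrow> ennreal) \<Rightarrow> ('s \<Rightarrow> enat) \<Rightarrow> 's \<Rightarrow> enat" where
  "Dmin_op P rew T x r s = (if s \<in> T then 0 else
     1 + (INF a\<in>Act_dec P rew x s. INF s'\<in>Post P s a. r s'))"

end

theory Submission
  imports Defs
begin

lemma reach_mono:
  assumes "\<forall>s a s'. 0 \<le> P s a s'"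
  shows "reach_within P \<sigma> T n s \<le> reach_within P \<sigma> T (Suc n) s"
proof (induction n arbitrary: s)
  case 0
  then show ?case by simp
next
  case (Suc n)
  show ?case
    using Suc by (simp add: sum_mono mult_left_mono)
qed

lemma reach_incseq:
  assumes "\<forall>s a s'. 0 \<le> P s a s'"
  shows "incseq (\<lambda>n. reach_within P \<sigma> T n s)"
  using reach_mono[OF assms] by (simp add: incseq_SucI)

lemma reach_fix:
  assumes "\<forall>s a s'. 0 \<le> P s a s'" and "s \<notin> T"
  shows "(\<Sum>s'\<in>UNIV. ennreal (P s (\<sigma> s) s') * (SUP n. reach_within P \<sigma> T n s'))
         \<le> (SUP n. reach_within P \<sigma> T n s)"
proof -
  have "(\<Sum>s'\<in>UNIV. ennreal (P s (\<sigma> s) s') * (SUP n. reach_within P \<sigma> T n s'))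
     = (\<Sum>s'\<in>UNIV. SUP n. ennreal (P s (\<sigma> s) s') * reach_within P \<sigma> T n s')"
    by (simp add: SUP_mult_left_ennreal)
  also have "\<dots> = (SUP n. \<Sum>s'\<in>UNIV. ennreal (P s (\<sigma> s) s') * reach_within P \<sigma> T n s')"
    by (rule ennreal_SUP_sum[symmetric])
       (use reach_mono[OF assms(1)] in \<open>auto simp: incseq_SucI mult_left_mono\<close>)
  also have "\<dots> = (SUP n. reach_within P \<sigma> T (Suc n) s)"
    using assms(2) by simp
  also have "\<dots> \<le> (SUP n. reach_within P \<sigma> T n s)"
    by (meson SUP_least SUP_upper UNIV_I)
  finally show ?thesis .
qed

lemma strict_avg:
  fixes p :: "'u::finite \<Rightarrow> real" and f :: "'u \<Rightarrow> ennreal"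
  assumes "\<forall>u. 0 \<le> p u" "(\<Sum>u\<in>UNIV. p u) = 1"
    and "\<forall>u. p u > 0 \<longrightarrow> f u \<ge> m" and "p u0 > 0" "f u0 > m" "m < top"
  shows "m < (\<Sum>u\<in>UNIV. ennreal (p u) * f u)"
proof -
  define U where "U = UNIV - {u0}"
  have B: "(\<Sum>u\<in>U. ennreal (p u) * m) \<le> (\<Sum>u\<in>U. ennreal (p u) * f u)"
    apply (rule sum_mono)
    using assms(1,3) by (metis ennreal_eq_0_iff less_eq_real_def mult_left_mono mult_zero_left zero_le)
  have fin: "(\<Sum>u\<in>U. ennreal (p u) * m) \<noteq> \<infinity>"
    using assms(6) by (auto simp: ennreal_mult_eq_top_iff)
  have S: "(\<Sum>u\<in>UNIV. g u) = g u0 + (\<Sum>u\<in>U. g u)" for g :: "'u \<Rightarrow> ennreal"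
    unfolding U_def by (simp add: sum.remove)
  have m_eq: "m = (\<Sum>u\<in>UNIV. ennreal (p u) * m)"
  proof -
    have "(\<Sum>u\<in>UNIV. ennreal (p u) * m) = (\<Sum>u\<in>UNIV. ennreal (p u)) * m"
      by (simp add: sum_distrib_right)
    also have "(\<Sum>u\<in>UNIV. ennreal (p u)) = ennreal (\<Sum>u\<in>UNIV. p u)"
      by (rule sum_ennreal) (use assms(1) in auto)
    finally have "(\<Sum>u\<in>UNIV. ennreal (p u) * m) = ennreal (\<Sum>u\<in>UNIV. p u) * m" .
    then show ?thesis using assms(2) by simp
  qed
  have lt: "ennreal (p u0) * m < ennreal (p u0) * f u0"
    by (rule ennreal_mult_strict_left_mono) (use assms in auto)
  then have "(\<Sum>u\<in>U. ennreal (p u) * m) + ennreal (p u0) * m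
       < (\<Sum>u\<in>U. ennreal (p u) * m) + ennreal (p u0) * f u0"
    unfolding ennreal_add_left_cancel_less using fin lt by blast
  also have "\<dots> \<le> (\<Sum>u\<in>U. ennreal (p u) * f u) + ennreal (p u0) * f u0"
    using B by (rule add_right_mono)
  also have "\<dots> = (\<Sum>u\<in>UNIV. ennreal (p u) * f u)"
    using S[of "\<lambda>u. ennreal (p u) * f u"] by (metis add.commute)
  finally show ?thesis
    using m_eq S[of "\<lambda>u. ennreal (p u) * m"] by (metis add.commute)
qed


theorem proposition9:
  fixes P :: "'s::finite \<Rightarrow> 'a::finite \<Rightarrow> 's \<Rightarrow> real"
    and T :: "'s set" and rew :: "'s \<Rightarrow> real"
    and x :: "'s \<Rightarrow> ennreal" and r :: "'s \<Rightarrow> enat"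
  assumes "is_MDP P"
    and "\<forall>s. rew s \<ge> 0"
    and "\<forall>s. Dmin_op P rew T x r s \<le> r s"
    and "\<forall>s. Emin_op P rew T x s \<le> x s"
    and "\<forall>s. x s < \<infinity> \<longrightarrow> r s < \<infinity>"
  shows "\<forall>s. exp_rew_min P rew T s \<le> x s"
proof -
  have Pnn: "\<forall>s a s'. 0 \<le> P s a s'" using assms(1) unfolding is_MDP_def by blast
  have Actne: "\<And>s. Act P s \<noteq> {}" using assms(1) unfolding is_MDP_def by blast
  have Actsum: "\<And>s a. a \<in> Act P s \<Longrightarrow> (\<Sum>s'\<in>UNIV. P s a s') = 1"
    unfolding Act_def by simp
  have UP: "(\<Sum>s'\<in>UNIV. ennreal (P s a s') * f s') = (\<Sum>s'\<in>Post P s a. ennreal (P s a s') * f s')"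
    for s a and f :: "'s \<Rightarrow> ennreal"
  proof (rule sum.mono_neutral_right)
    show "\<forall>i\<in>UNIV - Post P s a. ennreal (P s a i) * f i = 0"
      using Pnn unfolding Post_def by (auto simp: ennreal_eq_0_iff)
  qed auto
  have closed: "x s' < \<infinity>" if "a \<in> Act_dec P rew x s" "x s < \<infinity>" "s' \<in> Post P s a" for s a s'
  proof -
    have "ennreal (P s a s') * x s' \<le> (\<Sum>s'\<in>Post P s a. ennreal (P s a s') * x s')"
      by (rule member_le_sum) (use that in auto)
    also have "\<dots> \<le> ennreal (rew s) + (\<Sum>s'\<in>Post P s a. ennreal (P s a s') * x s')"
      by simp
    also have "\<dots> \<le> x s" using that(1) unfolding Act_dec_def by simp
    finally have "ennreal (P s a s') * x s' < \<infinity>" using that(2) by simp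
    moreover have "P s a s' > 0" using that(3) unfolding Post_def by simp
    ultimately show ?thesis
    proof (cases "x s' = top")
      case True
      assume a: "ennreal (P s a s') * x s' < \<infinity>" "P s a s' > 0"
      then have "ennreal (P s a s') \<noteq> 0" by simp
      then have "ennreal (P s a s') * x s' = top" using True by simp
      then show ?thesis using a by simp
    qed (simp add: less_top)
  qed
  have good: "\<exists>a\<in>Act_dec P rew x s. \<exists>s'\<in>Post P s a. r s' < r s"
    if "s \<notin> T" "x s < \<infinity>" for s
  proof (rule ccontr)
    assume "\<not> ?thesis"
    then have "r s \<le> (INF a\<in>Act_dec P rew x s. INF s'\<in>Post P s a. r s')"
      by (auto simp: le_INF_iff not_less)
    then have "1 + r s \<le> Dmin_op P rew T x r s"
      using that(1) unfolding Dmin_op_def by (simp add: add_left_mono)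
    also have "\<dots> \<le> r s" using assms(3) by blast
    finally have "1 + r s \<le> r s" .
    moreover have "r s < \<infinity>" using assms(5) that(2) by blast
    ultimately show False
      by (cases "r s") (auto simp: one_enat_def)
  qed
  define \<sigma> where "\<sigma> s = (if s \<notin> T \<and> x s < \<infinity>
      then (SOME a. a \<in> Act_dec P rew x s \<and> (\<exists>s'\<in>Post P s a. r s' < r s))
      else (SOME a. a \<in> Act P s))" for s
  have sig: "\<sigma> s \<in> Act_dec P rew x s \<and> (\<exists>s'\<in>Post P s (\<sigma> s). r s' < r s)"
    if "s \<notin> T" "x s < \<infinity>" for s
  proof -
    have "\<exists>a. a \<in> Act_dec P rew x s \<and> (\<exists>s'\<in>Post P s a. r s' < r s)"
      using good[OF that] by blast
    then have "(SOME a. a \<in> Act_dec P rew x s \<and> (\<exists>s'\<in>Post P s a. r s' < r s)) \<in> Act_dec P rew x s \<and> (\<exists>s'\<in>Post P s (SOME a. a \<in> Act_dec P rew x s \<and> (\<exists>s'\<in>Post P s a. r s' < r s)). r s' < r s)"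
      by (rule someI_ex)
    then show ?thesis unfolding \<sigma>_def using that by simp
  qed
  have strat: "strategy P \<sigma>"
    unfolding strategy_def
  proof
    fix s
    show "\<sigma> s \<in> Act P s"
    proof (cases "s \<notin> T \<and> x s < \<infinity>")
      case True
      then show ?thesis using sig[of s] unfolding Act_dec_def by auto
    next
      case False
      then have "\<sigma> s = (SOME a. a \<in> Act P s)" unfolding \<sigma>_def by (rule if_not_P)
      then show ?thesis using Actne[of s] by (simp add: some_in_eq)
    qed
  qed
  have acc: "acc_within P \<sigma> rew T n s \<le> x s" for n s
  proof (induction n arbitrary: s)
    case 0
    then show ?case by simp
  next
    case (Suc n)
    show ?case
    proof (cases "s \<in> T")
      case True
      then show ?thesis by simp
    next
      case nT: False
      show ?thesis
      proof (cases "x s < \<infinity>")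
        case False
        then show ?thesis by (simp add: top_unique not_less)
      next
        case True
        have "acc_within P \<sigma> rew T (Suc n) s
            = ennreal (rew s) + (\<Sum>s'\<in>UNIV. ennreal (P s (\<sigma> s) s') * acc_within P \<sigma> rew T n s')"
          using nT by simp
        also have "\<dots> \<le> ennreal (rew s) + (\<Sum>s'\<in>UNIV. ennreal (P s (\<sigma> s) s') * x s')"
          using Suc.IH by (intro add_left_mono sum_mono mult_left_mono) auto
        also have "\<dots> = ennreal (rew s) + (\<Sum>s'\<in>Post P s (\<sigma> s). ennreal (P s (\<sigma> s) s') * x s')"
          by (simp add: UP)
        also have "\<dots> \<le> x s" using sig[OF nT True] unfolding Act_dec_def by simp
        finally show ?thesis .
      qed
    qed
  qed
  define R where "R s = (SUP n. reach_within P \<sigma> T n s)" for s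
  define F where "F = {s. x s < \<infinity>}"
  have RT: "R s \<ge> 1" if "s \<in> T" for s
  proof -
    have "reach_within P \<sigma> T 0 s \<le> R s" unfolding R_def by (rule SUP_upper) auto
    then show ?thesis using that by simp
  qed
  have Rfix: "(\<Sum>s'\<in>UNIV. ennreal (P s (\<sigma> s) s') * R s') \<le> R s" if "s \<notin> T" for s
    unfolding R_def by (rule reach_fix[OF Pnn that])
  have main: "R s \<ge> 1" if "s \<in> F" for s
  proof (rule ccontr)
    assume "\<not> R s \<ge> 1"
    then have Rs: "R s < 1" by simp
    define m where "m = Min (R ` F)"
    have finF: "finite F" by simp
    have Fne: "F \<noteq> {}" using that by auto
    have mle: "m \<le> R u" if "u \<in> F" for u unfolding m_def using that finF by simp
    have m1: "m < 1" using mle[OF that] Rs by simp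
    define A where "A = {u\<in>F. R u = m}"
    have "m \<in> R ` F" unfolding m_def using finF Fne by (intro Min_in) auto
    then have Ane: "A \<noteq> {}" unfolding A_def by auto
    define k where "k = Min (r ` A)"
    have "k \<in> r ` A" unfolding k_def using Ane by (intro Min_in) auto
    then obtain s0 where s0A: "s0 \<in> A" and rk: "r s0 = k" by auto
    have kle: "k \<le> r u" if "u \<in> A" for u unfolding k_def using that by simp
    have s0F: "x s0 < \<infinity>" and Rs0: "R s0 = m" using s0A unfolding A_def F_def by auto
    have s0T: "s0 \<notin> T" using RT[of s0] Rs0 m1 by auto
    obtain s1 where s1P: "s1 \<in> Post P s0 (\<sigma> s0)" and rs1: "r s1 < r s0"
      using sig[OF s0T s0F] by blast
    have dec: "\<sigma> s0 \<in> Act_dec P rew x s0" using sig[OF s0T s0F] by blast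
    have s1F: "s1 \<in> F" unfolding F_def using closed[OF dec s0F s1P] by simp
    have "s1 \<notin> A" using kle rs1 rk by force
    then have Rs1: "R s1 > m" using mle[OF s1F] s1F unfolding A_def by auto
    have "m < (\<Sum>u\<in>UNIV. ennreal (P s0 (\<sigma> s0) u) * R u)"
    proof (rule strict_avg)
      show "\<forall>u. 0 \<le> P s0 (\<sigma> s0) u" using Pnn by blast
      show "(\<Sum>u\<in>UNIV. P s0 (\<sigma> s0) u) = 1"
        using strat unfolding strategy_def by (intro Actsum) blast
      show "\<forall>u. 0 < P s0 (\<sigma> s0) u \<longrightarrow> m \<le> R u"
      proof (intro allI impI)
        fix u assume "0 < P s0 (\<sigma> s0) u"
        then have "u \<in> Post P s0 (\<sigma> s0)" unfolding Post_def by simp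
        then have "u \<in> F" unfolding F_def using closed[OF dec s0F] by simp
        then show "m \<le> R u" by (rule mle)
      qed
      show "0 < P s0 (\<sigma> s0) s1" using s1P unfolding Post_def by simp
      show "m < R s1" by (rule Rs1)
      show "m < top" using m1 by (metis ennreal_one_less_top less_trans)
    qed
    also have "\<dots> \<le> R s0" by (rule Rfix[OF s0T])
    finally show False using Rs0 by simp
  qed
  show ?thesis
  proof
    fix s
    have "exp_rew_min P rew T s \<le> exp_rew P \<sigma> rew T s"
      unfolding exp_rew_min_def using strat by (intro INF_lower) simp
    also have "\<dots> \<le> x s"
    proof (cases "x s < \<infinity>")
      case False
      then show ?thesis by (simp add: top_unique not_less)
    next
      case True
      then have "R s \<ge> 1" using main unfolding F_def by simp
      then have "exp_rew P \<sigma> rew T s = (SUP n. acc_within P \<sigma> rew T n s)"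
        unfolding exp_rew_def R_def by (auto simp: not_less)
      also have "\<dots> \<le> x s" by (rule SUP_least) (rule acc)
      finally show ?thesis .
    qed
    finally show "exp_rew_min P rew T s \<le> x s" .
  qed
qed

end
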